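(* Let $n\ge 1$ and let $P'$, $P''$ be two probability distributions on $\mathfrak{S}_n$. For $i<j$ put $p'_{i,j}=\mathbb{P}_{\Sigma\sim P'}\{\Sigma(i)<\Sigma(j)\}$ and $p''_{i,j}=\mathbb{P}_{\Sigma\sim P''}\{\Sigma(i)<\Sigma(j)\}$. (i) Let $\sigma_{P''}$ be any Kemeny median of $P''$. Then $$L^*_{P'}\le L_{P'}(\sigma_{P''})\le L^*_{P'}+2\sum_{i<j}|p'_{i,j}-p''_{i,j}|.$$ (ii) Suppose that $P'\in\mathcal{T}$ and $P''\in\mathcal{T}$, and set $h=\min_{i<j}|p''_{i,j}-1/2|$. Then $$d_\tau(\sigma^*_{P'},\sigma^*_{P''})\le \frac{1}{h}\sum_{i<j}|p'_{i,j}-p''_{i,j}|.$$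
   Context: $\mathfrak{S}_n$ is the set of permutations of $[n]=\{1,\dots,n\}$. A ranking is a permutation $\sigma$, where $\sigma(i)$ is the rank of item $i$. The Kendall $\tau$ distance is $d_\tau(\sigma,\sigma')=\sum_{i<j}\mathbb{I}\{(\sigma(i)-\sigma(j))(\sigma'(i)-\sigma'(j))<0\}$. For a probability distribution $P$ on $\mathfrak{S}_n$ and $\Sigma\sim P$, set $L_P(\sigma)=\mathbb{E}_{\Sigma\sim P}[d_\tau(\Sigma,\sigma)]$ and $L_P^*=\min_{\sigma\in\mathfrak{S}_n}L_P(\sigma)$. A Kemeny median of $P$ is any minimizer of $L_P$. The pairwise probabilities of $P$ are $p_{i,j}=\mathbb{P}\{\Sigma(i)<\Sigma(j)\}$. $P$ is strictly stochastically transitive if (a) for all $i,j,k\in[n]$, $p_{i,j}\ge1/2$ and $p_{j,k}\ge 1/2$ imply $p_{i,k}\ge 1/2$, and (b) $p_{i,j}\ne 1/2$ for all $i<j$. $\mathcal{T}$ denotes the set of strictly stochastically transitive distributions on $\mathfrak{S}_n$. For $P\in\mathcal{T}$ the Kemeny median is unique; it is denoted $\sigma^*_P$ and equals $\sigma^*_P(i)=1+\sum_{k\ne i}\mathbb{I}\{p_{i,k}<1/2\}$. *)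

theory Defs
  imports "HOL-Probability.Probability" "HOL-Combinatorics.Permutations"
begin

definition perms :: "nat \<Rightarrow> (nat \<Rightarrow> nat) set" where
  "perms n = {\<sigma>. \<sigma> permutes {1..n}}"

definition dtau :: "nat \<Rightarrow> (nat \<Rightarrow> nat) \<Rightarrow> (nat \<Rightarrow> nat) \<Rightarrow> nat" where
  "dtau n \<sigma> \<sigma>' = card {(i,j). 1 \<le> i \<and> i < j \<and> j \<le> n \<and>
      (int (\<sigma> i) - int (\<sigma> j)) * (int (\<sigma>' i) - int (\<sigma>' j)) < 0}"

definition is_dist :: "nat \<Rightarrow> (nat \<Rightarrow> nat) pmf \<Rightarrow> bool" where
  "is_dist n P \<longleftrightarrow> set_pmf P \<subseteq> perms n"

definition risk :: "nat \<Rightarrow> (nat \<Rightarrow> nat) pmf \<Rightarrow> (nat \<Rightarrow> nat) \<Rightarrow> real" where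
  "risk n P \<sigma> = measure_pmf.expectation P (\<lambda>\<Sigma>. real (dtau n \<Sigma> \<sigma>))"

definition risk_star :: "nat \<Rightarrow> (nat \<Rightarrow> nat) pmf \<Rightarrow> real" where
  "risk_star n P = Min (risk n P ` perms n)"

definition kemeny_median :: "nat \<Rightarrow> (nat \<Rightarrow> nat) pmf \<Rightarrow> (nat \<Rightarrow> nat) \<Rightarrow> bool" where
  "kemeny_median n P \<sigma> \<longleftrightarrow> \<sigma> \<in> perms n \<and> (\<forall>\<tau>\<in>perms n. risk n P \<sigma> \<le> risk n P \<tau>)"

definition pw :: "(nat \<Rightarrow> nat) pmf \<Rightarrow> nat \<Rightarrow> nat \<Rightarrow> real" where
  "pw P i j = measure_pmf.prob P {\<Sigma>. \<Sigma> i < \<Sigma> j}"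

definition strictly_sst :: "nat \<Rightarrow> (nat \<Rightarrow> nat) pmf \<Rightarrow> bool" where
  "strictly_sst n P \<longleftrightarrow>
     (\<forall>i\<in>{1..n}. \<forall>j\<in>{1..n}. \<forall>k\<in>{1..n}.
        pw P i j \<ge> 1/2 \<and> pw P j k \<ge> 1/2 \<longrightarrow> pw P i k \<ge> 1/2) \<and>
     (\<forall>i\<in>{1..n}. \<forall>j\<in>{1..n}. i < j \<longrightarrow> pw P i j \<noteq> 1/2)"

text \<open>The Kemeny median of an SST distribution, via the explicit formula.\<close>
definition sigma_star :: "nat \<Rightarrow> (nat \<Rightarrow> nat) pmf \<Rightarrow> nat \<Rightarrow> nat" where
  "sigma_star n P i = (if i \<in> {1..n} then 1 + card {k\<in>{1..n}. k \<noteq> i \<and> pw P i k < 1/2} else i)"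

definition pairs :: "nat \<Rightarrow> (nat \<times> nat) set" where
  "pairs n = {(i,j). 1 \<le> i \<and> i < j \<and> j \<le> n}"

end

theory Submission imports Defs begin

lemma fin_perms: "finite (perms n)"
  unfolding perms_def using finite_permutations[of "{1..n}"] by simp

lemma fin_pairs: "finite (pairs n)"
proof -
  have "pairs n \<subseteq> {1..n} \<times> {1..n}" unfolding pairs_def by auto
  thus ?thesis using finite_subset by blast
qed

lemma prob_sum:
  assumes "is_dist n P"
  shows "measure_pmf.prob P A = (\<Sum>s\<in>perms n. pmf P s * of_bool (s \<in> A))"
proof -
  have "measure_pmf.prob P A = (\<integral>x. indicator A x \<partial>measure_pmf P)" by simp
  also have "\<dots> = (\<Sum>s\<in>perms n. indicator A s * pmf P s)"
    apply (rule integral_measure_pmf_real[OF fin_perms])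
    using assms unfolding is_dist_def by auto
  finally show ?thesis by (simp add: indicator_def mult.commute)
qed

lemma pw_sum:
  assumes "is_dist n P"
  shows "pw P i j = (\<Sum>s\<in>perms n. pmf P s * of_bool (s i < s j))"
  unfolding pw_def using prob_sum[OF assms] by simp

lemma sum_w1: "is_dist n P \<Longrightarrow> (\<Sum>s\<in>perms n. pmf P s) = 1"
  by (rule sum_pmf_eq_1[OF fin_perms]) (auto simp: is_dist_def)

lemma perm_neq:
  assumes "s \<in> perms n" "i \<in> {1..n}" "j \<in> {1..n}" "i \<noteq> j"
  shows "s i \<noteq> s j"
proof -
  have "inj s" using assms(1) unfolding perms_def by (simp add: permutes_inj)
  thus ?thesis using assms(4) by (simp add: inj_eq)
qed

lemma pw_compl:
  assumes "is_dist n P" "i \<in> {1..n}" "j \<in> {1..n}" "i \<noteq> j"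
  shows "pw P j i = 1 - pw P i j"
proof -
  have "pw P j i = (\<Sum>s\<in>perms n. pmf P s * (1 - of_bool (s i < s j)))"
    unfolding pw_sum[OF assms(1)]
  proof (rule sum.cong)
    fix s assume "s \<in> perms n"
    hence "s i \<noteq> s j" using perm_neq assms by blast
    thus "pmf P s * of_bool (s j < s i) = pmf P s * (1 - of_bool (s i < s j))" by auto
  qed simp
  also have "\<dots> = (\<Sum>s\<in>perms n. pmf P s) - pw P i j"
    unfolding pw_sum[OF assms(1)] by (simp add: right_diff_distrib sum_subtractf)
  finally show ?thesis using sum_w1[OF assms(1)] by simp
qed

lemma dtau_sum:
  "real (dtau n s \<sigma>) = (\<Sum>(i,j)\<in>pairs n.
      of_bool ((int (s i) - int (s j)) * (int (\<sigma> i) - int (\<sigma> j)) < 0))"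
proof -
  have e: "{(i,j). 1 \<le> i \<and> i < j \<and> j \<le> n \<and>
      (int (s i) - int (s j)) * (int (\<sigma> i) - int (\<sigma> j)) < 0}
    = {p \<in> pairs n. (\<lambda>(i,j). (int (s i) - int (s j)) * (int (\<sigma> i) - int (\<sigma> j)) < 0) p}"
    unfolding pairs_def by auto
  have "real (card {p \<in> pairs n. (\<lambda>(i,j). (int (s i) - int (s j)) * (int (\<sigma> i) - int (\<sigma> j)) < 0) p})
     = (\<Sum>p\<in>{p \<in> pairs n. (\<lambda>(i,j). (int (s i) - int (s j)) * (int (\<sigma> i) - int (\<sigma> j)) < 0) p}. 1)"
    by simp
  also have "\<dots> = (\<Sum>p\<in>pairs n. if (\<lambda>(i,j). (int (s i) - int (s j)) * (int (\<sigma> i) - int (\<sigma> j)) < 0) p then 1 else 0)"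
    by (rule sum.inter_filter[OF fin_pairs])
  finally show ?thesis unfolding dtau_def e
    by (simp add: case_prod_unfold of_bool_def)
qed

lemma risk_formula:
  assumes "is_dist n P" "\<sigma> \<in> perms n"
  shows "risk n P \<sigma> = (\<Sum>(i,j)\<in>pairs n. if \<sigma> i < \<sigma> j then 1 - pw P i j else pw P i j)"
proof -
  have "risk n P \<sigma> = (\<Sum>s\<in>perms n. \<Sum>(i,j)\<in>pairs n. pmf P s *
      of_bool ((int (s i) - int (s j)) * (int (\<sigma> i) - int (\<sigma> j)) < 0))"
    unfolding risk_def
    apply (subst integral_measure_pmf_real[OF fin_perms, of P])
    using assms(1) apply (auto simp: is_dist_def)[1]
    by (simp add: dtau_sum sum_distrib_left mult.commute case_prod_unfold)
  also have "\<dots> = (\<Sum>(i,j)\<in>pairs n. \<Sum>s\<in>perms n. pmf P s *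
      of_bool ((int (s i) - int (s j)) * (int (\<sigma> i) - int (\<sigma> j)) < 0))"
    by (subst sum.swap) (simp add: case_prod_unfold)
  also have "\<dots> = (\<Sum>(i,j)\<in>pairs n. if \<sigma> i < \<sigma> j then 1 - pw P i j else pw P i j)"
  proof (rule sum.cong, simp, clarify)
    fix i j assume ij: "(i,j) \<in> pairs n"
    hence ij': "i \<in> {1..n}" "j \<in> {1..n}" "i \<noteq> j" unfolding pairs_def by auto
    have sn: "\<sigma> i \<noteq> \<sigma> j" using perm_neq[OF assms(2) ij'] .
    show "(\<Sum>s\<in>perms n. pmf P s *
      of_bool ((int (s i) - int (s j)) * (int (\<sigma> i) - int (\<sigma> j)) < 0))
      = (if \<sigma> i < \<sigma> j then 1 - pw P i j else pw P i j)"
    proof (cases "\<sigma> i < \<sigma> j")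
      case True
      have "(\<Sum>s\<in>perms n. pmf P s *
        of_bool ((int (s i) - int (s j)) * (int (\<sigma> i) - int (\<sigma> j)) < 0)) = pw P j i"
        unfolding pw_sum[OF assms(1)]
      proof (rule sum.cong, simp)
        fix s assume "s \<in> perms n"
        hence "s i \<noteq> s j" using perm_neq ij' by blast
        thus "pmf P s * of_bool ((int (s i) - int (s j)) * (int (\<sigma> i) - int (\<sigma> j)) < 0)
          = pmf P s * of_bool (s j < s i)" using True
          by (cases "s i < s j") (auto simp: mult_less_0_iff)
      qed
      thus ?thesis using True pw_compl[OF assms(1) ij'] by simp
    next
      case False
      have "(\<Sum>s\<in>perms n. pmf P s *
        of_bool ((int (s i) - int (s j)) * (int (\<sigma> i) - int (\<sigma> j)) < 0)) = pw P i j"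
        unfolding pw_sum[OF assms(1)]
      proof (rule sum.cong, simp)
        fix s assume "s \<in> perms n"
        hence "s i \<noteq> s j" using perm_neq ij' by blast
        thus "pmf P s * of_bool ((int (s i) - int (s j)) * (int (\<sigma> i) - int (\<sigma> j)) < 0)
          = pmf P s * of_bool (s i < s j)" using False sn
          by (cases "s i < s j") (auto simp: mult_less_0_iff)
      qed
      thus ?thesis using False by simp
    qed
  qed
  finally show ?thesis .
qed

lemma risk_diff:
  assumes "is_dist n P1" "is_dist n P2" "\<sigma> \<in> perms n"
  shows "\<bar>risk n P1 \<sigma> - risk n P2 \<sigma>\<bar> \<le> (\<Sum>(i,j)\<in>pairs n. \<bar>pw P1 i j - pw P2 i j\<bar>)"
proof -
  define f where "f P p = (if \<sigma> (fst p) < \<sigma> (snd p) then 1 - pw P (fst p) (snd p) else pw P (fst p) (snd p))" for P p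
  have r: "risk n P \<sigma> = (\<Sum>p\<in>pairs n. f P p)" if "is_dist n P" for P
    unfolding risk_formula[OF that assms(3)] f_def case_prod_unfold by (rule refl)
  have "risk n P1 \<sigma> - risk n P2 \<sigma> = (\<Sum>p\<in>pairs n. f P1 p - f P2 p)"
    unfolding r[OF assms(1)] r[OF assms(2)] by (rule sum_subtractf[symmetric])
  also have "\<bar>\<dots>\<bar> \<le> (\<Sum>p\<in>pairs n. \<bar>f P1 p - f P2 p\<bar>)"
    by (rule sum_abs)
  also have "\<dots> = (\<Sum>p\<in>pairs n. \<bar>pw P1 (fst p) (snd p) - pw P2 (fst p) (snd p)\<bar>)"
  proof (rule sum.cong)
    fix p
    show "\<bar>f P1 p - f P2 p\<bar> = \<bar>pw P1 (fst p) (snd p) - pw P2 (fst p) (snd p)\<bar>"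
    proof (cases "\<sigma> (fst p) < \<sigma> (snd p)")
      case True
      hence "f P1 p - f P2 p = - (pw P1 (fst p) (snd p) - pw P2 (fst p) (snd p))"
        unfolding f_def by simp
      thus ?thesis by (simp only: abs_minus_cancel)
    next
      case False
      hence "f P1 p - f P2 p = pw P1 (fst p) (snd p) - pw P2 (fst p) (snd p)"
        unfolding f_def by simp
      thus ?thesis by (simp only:)
    qed
  qed (rule refl)
  finally show ?thesis by (simp only: case_prod_unfold)
qed

lemma part1:
  assumes "is_dist n P1" "is_dist n P2" "kemeny_median n P2 \<sigma>"
  shows "risk_star n P1 \<le> risk n P1 \<sigma> \<and>
            risk n P1 \<sigma> \<le> risk_star n P1 + 2 * (\<Sum>(i,j)\<in>pairs n. \<bar>pw P1 i j - pw P2 i j\<bar>)"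
proof -
  let ?D = "(\<Sum>(i,j)\<in>pairs n. \<bar>pw P1 i j - pw P2 i j\<bar>)"
  have sp: "\<sigma> \<in> perms n" and med: "\<forall>\<tau>\<in>perms n. risk n P2 \<sigma> \<le> risk n P2 \<tau>"
    using assms(3) unfolding kemeny_median_def by auto
  have ne: "perms n \<noteq> {}" using permutes_id unfolding perms_def by blast
  have fin: "finite (risk n P1 ` perms n)" using fin_perms by simp
  have a: "risk_star n P1 \<le> risk n P1 \<sigma>" unfolding risk_star_def
    using Min_le[OF fin] sp by simp
  have "risk_star n P1 \<in> risk n P1 ` perms n" unfolding risk_star_def
    using Min_in[OF fin] ne by simp
  then obtain \<tau> where tp: "\<tau> \<in> perms n" and rt: "risk n P1 \<tau> = risk_star n P1" by auto
  have "risk n P1 \<sigma> \<le> risk n P2 \<sigma> + ?D" using risk_diff[OF assms(1,2) sp] by simp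
  also have "\<dots> \<le> risk n P2 \<tau> + ?D" using med tp by simp
  also have "\<dots> \<le> risk n P1 \<tau> + 2 * ?D" using risk_diff[OF assms(1,2) tp] by simp
  finally show ?thesis using a rt by simp
qed

lemma pw_ne_half:
  assumes "is_dist n P" "strictly_sst n P" "i \<in> {1..n}" "j \<in> {1..n}" "i \<noteq> j"
  shows "pw P i j \<noteq> 1/2"
proof (cases "i < j")
  case True
  have s2: "\<forall>i\<in>{1..n}. \<forall>j\<in>{1..n}. i < j \<longrightarrow> pw P i j \<noteq> 1/2"
    using assms(2) unfolding strictly_sst_def by (rule conjunct2)
  thus ?thesis using True assms(3,4) by simp
next
  case False
  hence "j < i" using assms(5) by simp
  moreover have s2: "\<forall>i\<in>{1..n}. \<forall>j\<in>{1..n}. i < j \<longrightarrow> pw P i j \<noteq> 1/2"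
    using assms(2) unfolding strictly_sst_def by (rule conjunct2)
  ultimately have "pw P j i \<noteq> 1/2" using assms(3,4) by simp
  thus ?thesis using pw_compl[OF assms(1) assms(4,3)] assms(5) by auto
qed

lemma sst_order:
  assumes "is_dist n P" "strictly_sst n P" "i \<in> {1..n}" "j \<in> {1..n}" "i \<noteq> j"
    and gt: "pw P i j > 1/2"
  shows "sigma_star n P i < sigma_star n P j"
proof -
  define A where "A x = {k\<in>{1..n}. k \<noteq> x \<and> pw P x k < 1/2}" for x
  have tr: "\<forall>i\<in>{1..n}. \<forall>j\<in>{1..n}. \<forall>k\<in>{1..n}.
        pw P i j \<ge> 1/2 \<and> pw P j k \<ge> 1/2 \<longrightarrow> pw P i k \<ge> 1/2"
    using assms(2) unfolding strictly_sst_def by (rule conjunct1)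
  have sub: "A i \<subset> A j"
  proof
    show "A i \<subseteq> A j"
    proof
      fix k assume "k \<in> A i"
      hence k: "k \<in> {1..n}" "k \<noteq> i" "pw P i k < 1/2" unfolding A_def by auto
      have "pw P k i = 1 - pw P i k" using pw_compl[OF assms(1) assms(3) k(1)] k(2) by auto
      hence ki: "pw P k i \<ge> 1/2" using k by simp
      have kj: "k \<noteq> j" using k gt by auto
      have "pw P k j \<ge> 1/2" using tr[rule_format, OF k(1) assms(3) assms(4)] ki gt by simp
      moreover have "pw P j k = 1 - pw P k j" using pw_compl[OF assms(1) k(1) assms(4)] kj by auto
      moreover have "pw P j k \<noteq> 1/2" using pw_ne_half[OF assms(1,2) assms(4) k(1)] kj by auto
      ultimately have "pw P j k < 1/2" by linarith
      thus "k \<in> A j" using k kj unfolding A_def by auto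
    qed
    have "pw P j i = 1 - pw P i j" using pw_compl[OF assms(1,3,4,5)] .
    hence "i \<in> A j" using gt assms(3,5) unfolding A_def by auto
    moreover have "i \<notin> A i" unfolding A_def by auto
    ultimately show "A i \<noteq> A j" by blast
  qed
  have "card (A i) < card (A j)" by (rule psubset_card_mono) (use sub in \<open>simp_all add: A_def\<close>)
  thus ?thesis using assms(3,4) unfolding sigma_star_def A_def by simp
qed

lemma sst_iff:
  assumes "is_dist n P" "strictly_sst n P" "i \<in> {1..n}" "j \<in> {1..n}" "i \<noteq> j"
  shows "(sigma_star n P i < sigma_star n P j) = (pw P i j > 1/2)"
    and "(sigma_star n P j < sigma_star n P i) = (pw P i j < 1/2)"
proof -
  have c: "pw P j i = 1 - pw P i j" using pw_compl[OF assms(1,3,4,5)] .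
  have h: "pw P i j \<noteq> 1/2" using pw_ne_half[OF assms] .
  have 1: "pw P i j > 1/2 \<Longrightarrow> sigma_star n P i < sigma_star n P j" using sst_order[OF assms] .
  have 2: "pw P i j < 1/2 \<Longrightarrow> sigma_star n P j < sigma_star n P i"
    using sst_order[OF assms(1,2,4,3)] assms(5) c by auto
  show "(sigma_star n P i < sigma_star n P j) = (pw P i j > 1/2)"
  proof (cases "pw P i j > 1/2")
    case True thus ?thesis using 1 2 by auto
  next
    case False hence "pw P i j < 1/2" using h by simp
    thus ?thesis using 2 by auto
  qed
  show "(sigma_star n P j < sigma_star n P i) = (pw P i j < 1/2)"
  proof (cases "pw P i j > 1/2")
    case True thus ?thesis using 1 2 by auto
  next
    case False hence "pw P i j < 1/2" using h by simp
    thus ?thesis using 2 by auto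
  qed
qed

lemma part2:
  assumes "is_dist n P1" "is_dist n P2" "strictly_sst n P1" "strictly_sst n P2"
  shows "real (dtau n (sigma_star n P1) (sigma_star n P2))
              \<le> (\<Sum>(i,j)\<in>pairs n. \<bar>pw P1 i j - pw P2 i j\<bar>)
                 / Min ((\<lambda>(i,j). \<bar>pw P2 i j - 1/2\<bar>) ` pairs n)"
proof -
  let ?s1 = "sigma_star n P1" and ?s2 = "sigma_star n P2"
  let ?D = "(\<Sum>(i,j)\<in>pairs n. \<bar>pw P1 i j - pw P2 i j\<bar>)"
  let ?h = "Min ((\<lambda>(i,j). \<bar>pw P2 i j - 1/2\<bar>) ` pairs n)"
  define R where "R i j \<longleftrightarrow> (int (?s1 i) - int (?s1 j)) * (int (?s2 i) - int (?s2 j)) < 0" for i j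
  define B where "B = {(i,j). 1 \<le> i \<and> i < j \<and> j \<le> n \<and> R i j}"
  have dB: "dtau n ?s1 ?s2 = card B" unfolding dtau_def B_def R_def by (rule refl)
  show ?thesis
  proof (cases "pairs n = {}")
    case True
    hence "B = {}" unfolding B_def pairs_def by blast
    thus ?thesis using dB True by simp
  next
    case False
    have finI: "finite ((\<lambda>(i,j). \<bar>pw P2 i j - 1/2\<bar>) ` pairs n)" using fin_pairs by simp
    have hpos: "?h > 0"
    proof -
      have "?h \<in> (\<lambda>(i,j). \<bar>pw P2 i j - 1/2\<bar>) ` pairs n" using Min_in[OF finI] False by simp
      then obtain i j where ij: "(i,j) \<in> pairs n" and e: "?h = \<bar>pw P2 i j - 1/2\<bar>" by auto
      hence "i \<in> {1..n}" "j \<in> {1..n}" "i \<noteq> j" unfolding pairs_def by auto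
      hence "pw P2 i j \<noteq> 1/2" using pw_ne_half[OF assms(2,4)] by blast
      thus ?thesis using e by simp
    qed
    have key: "?h \<le> \<bar>pw P1 i j - pw P2 i j\<bar>" if "(i,j) \<in> B" for i j
    proof -
      have ij: "(i,j) \<in> pairs n" and q: "R i j" using that unfolding B_def pairs_def by auto
      hence ij': "i \<in> {1..n}" "j \<in> {1..n}" "i \<noteq> j" unfolding pairs_def by auto
      have hl: "?h \<le> \<bar>pw P2 i j - 1/2\<bar>" 
        by (rule Min_le[OF finI], rule image_eqI[where x="(i,j)"]) (use ij in simp_all)
      note a1 = sst_iff[OF assms(1,3) ij'] and a2 = sst_iff[OF assms(2,4) ij']
      have n1: "pw P1 i j \<noteq> 1/2" using pw_ne_half[OF assms(1,3) ij'] .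
      have n2: "pw P2 i j \<noteq> 1/2" using pw_ne_half[OF assms(2,4) ij'] .
      have "(pw P1 i j > 1/2 \<and> pw P2 i j < 1/2) \<or> (pw P1 i j < 1/2 \<and> pw P2 i j > 1/2)"
      proof (rule ccontr)
        assume "\<not> ?thesis"
        hence "(pw P1 i j > 1/2 \<and> pw P2 i j > 1/2) \<or> (pw P1 i j < 1/2 \<and> pw P2 i j < 1/2)"
          using n1 n2 by linarith
        thus False
        proof
          assume "pw P1 i j > 1/2 \<and> pw P2 i j > 1/2"
          hence "?s1 i < ?s1 j" "?s2 i < ?s2 j" using a1 a2 by auto
          hence "(int (?s1 i) - int (?s1 j)) * (int (?s2 i) - int (?s2 j)) > 0"
            by (intro mult_neg_neg) simp_all
          thus False using q unfolding R_def by simp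
        next
          assume "pw P1 i j < 1/2 \<and> pw P2 i j < 1/2"
          hence "?s1 j < ?s1 i" "?s2 j < ?s2 i" using a1 a2 by auto
          hence "(int (?s1 i) - int (?s1 j)) * (int (?s2 i) - int (?s2 j)) > 0"
            by (intro mult_pos_pos) simp_all
          thus False using q unfolding R_def by simp
        qed
      qed
      thus ?thesis using hl by linarith
    qed
    have "real (card B) * ?h = (\<Sum>p\<in>B. ?h)" by simp
    also have "\<dots> \<le> (\<Sum>p\<in>B. (\<lambda>(i,j). \<bar>pw P1 i j - pw P2 i j\<bar>) p)"
      by (rule sum_mono) (use key in auto)
    also have "\<dots> \<le> ?D"
      by (rule sum_mono2[OF fin_pairs]) (auto simp: B_def pairs_def)
    finally have "real (card B) * ?h \<le> ?D" .
    thus ?thesis using dB hpos by (simp add: pos_le_divide_eq)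
  qed
qed

theorem lemma4:
  fixes n :: nat and P1 P2 :: "(nat \<Rightarrow> nat) pmf"
  assumes "n \<ge> 1" and "is_dist n P1" and "is_dist n P2"
  shows "(\<forall>\<sigma>. kemeny_median n P2 \<sigma> \<longrightarrow>
            risk_star n P1 \<le> risk n P1 \<sigma> \<and>
            risk n P1 \<sigma> \<le> risk_star n P1 + 2 * (\<Sum>(i,j)\<in>pairs n. \<bar>pw P1 i j - pw P2 i j\<bar>))
       \<and> (strictly_sst n P1 \<and> strictly_sst n P2 \<longrightarrow>
            real (dtau n (sigma_star n P1) (sigma_star n P2))
              \<le> (\<Sum>(i,j)\<in>pairs n. \<bar>pw P1 i j - pw P2 i j\<bar>)
                 / Min ((\<lambda>(i,j). \<bar>pw P2 i j - 1/2\<bar>) ` pairs n))"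
proof (rule conjI)
  show "\<forall>\<sigma>. kemeny_median n P2 \<sigma> \<longrightarrow>
            risk_star n P1 \<le> risk n P1 \<sigma> \<and>
            risk n P1 \<sigma> \<le> risk_star n P1 + 2 * (\<Sum>(i,j)\<in>pairs n. \<bar>pw P1 i j - pw P2 i j\<bar>)"
  proof (intro allI impI)
    fix \<sigma> assume "kemeny_median n P2 \<sigma>"
    thus "risk_star n P1 \<le> risk n P1 \<sigma> \<and>
            risk n P1 \<sigma> \<le> risk_star n P1 + 2 * (\<Sum>(i,j)\<in>pairs n. \<bar>pw P1 i j - pw P2 i j\<bar>)"
      by (rule part1[OF assms(2,3)])
  qed
next
  show "strictly_sst n P1 \<and> strictly_sst n P2 \<longrightarrow>
            real (dtau n (sigma_star n P1) (sigma_star n P2))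
              \<le> (\<Sum>(i,j)\<in>pairs n. \<bar>pw P1 i j - pw P2 i j\<bar>)
                 / Min ((\<lambda>(i,j). \<bar>pw P2 i j - 1/2\<bar>) ` pairs n)"
  proof (rule impI)
    assume h: "strictly_sst n P1 \<and> strictly_sst n P2"
    show "real (dtau n (sigma_star n P1) (sigma_star n P2))
              \<le> (\<Sum>(i,j)\<in>pairs n. \<bar>pw P1 i j - pw P2 i j\<bar>)
                 / Min ((\<lambda>(i,j). \<bar>pw P2 i j - 1/2\<bar>) ` pairs n)"
      by (rule part2[OF assms(2,3) conjunct1[OF h] conjunct2[OF h]])
  qed
qed

end
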